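(* Let $f$ be convex, continuously differentiable, with minimizer $x^*$, minimum value $f^*$ and coordinate-wise Lipschitz constants $L_i>0$, and fix $\alpha\ge0$. Assume $\sigma_{1-\alpha}>0$ (defined with respect to the $\tilde L$-weighted norm below). Fix $x_0\in\mathbb{R}^n$ and put $\theta=\sqrt{\sigma_{1-\alpha}/(2\tilde S_\alpha n)}$, $\zeta_0=\sigma_{1-\alpha}$, $v_0=x_0$, $\phi_0(x)=f(x_0)+\frac{\sigma_{1-\alpha}}{2}\|x-x_0\|_{1-\alpha}^2$. Construct $\phi_k,\zeta_k,v_k$ by the recursion $\zeta_{k+1}=(1-\theta)\zeta_k+\theta\sigma_{1-\alpha}$ (so $\zeta_k=\sigma_{1-\alpha}$), $v_{k+1}=\frac{1}{\zeta_{k+1}}\big[(1-\theta)\zeta_kv_k+\theta\sigma_{1-\alpha}y_k-\frac{\tilde S_\alpha\theta}{\tilde L_{i_k}}\vec f_{i_k}(y_k)\big]$, where $i_0,i_1,\dots$ are independent with $\Pr[i_k=i]=\tilde L_i^\alpha/\tilde S_\alpha$, $y_0=x_0$, and for $k\ge1$ $$x_k=y_{k-1}-\tfrac{1}{\tilde L_{i_{k-1}}}\vec f_{i_{k-1}}(y_{k-1}),\qquad y_k\ \text{ determined by }\ \tfrac{\theta\zeta_k}{\zeta_{k+1}}(v_k-y_k)+x_k-y_k=0.$$ Then for all $k\ge0$, $$\mathbb{E}[f(x_k)]-f^*\le\Big(1-\tfrac12\sqrt{\tfrac{\sigma_{1-\alpha}}{S_\alpha n}}\Big)^k\Big(f(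x_0)-f^*+\sigma_{1-\alpha}\|x^*-x_0\|_{1-\alpha}^2\Big).$$
   Context: $f_i(x)=e_i^T\nabla f(x)$, $\vec f_i(x)=f_i(x)e_i$; $L_i$ are coordinate-wise Lipschitz constants: $|f_i(x+te_i)-f_i(x)|\le L_i|t|$. $S_\alpha=\sum_iL_i^\alpha$. Define $\tilde L_i$ by $\tilde L_i^\alpha=\max(L_i^\alpha,S_\alpha/n)$ (for $\alpha=0$, $\tilde L_i=L_i$) and $\tilde S_\alpha=\sum_i\tilde L_i^\alpha$; the $\tilde L_i$ are again coordinate-wise Lipschitz constants and $S_\alpha\le\tilde S_\alpha\le2S_\alpha$. In this statement $\|x\|_{1-\alpha}=\sqrt{\sum_i\tilde L_i^{1-\alpha}x_i^2}$ (for $\alpha=1$ this is the Euclidean norm), and $\sigma_{1-\alpha}$ is a convexity parameter of $f$ with respect to it: $f(y)\ge f(x)+\langle\nabla f(x),y-x\rangle+\frac{\sigma_{1-\alpha}}2\|y-x\|_{1-\alpha}^2$ for all $x,y$. *)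

theory Defs
  imports "HOL-Analysis.Analysis"
begin

text \<open>Coordinates are indexed by a finite type 'n, so vectors live in real^'n and n = CARD('n).
  The gradient of f is given as a vector field g.\<close>

definition S_alpha :: "real \<Rightarrow> ('n::finite \<Rightarrow> real) \<Rightarrow> real" where
  "S_alpha \<alpha> L = (\<Sum>i\<in>UNIV. L i powr \<alpha>)"

definition L_tilde :: "real \<Rightarrow> ('n::finite \<Rightarrow> real) \<Rightarrow> 'n \<Rightarrow> real" where
  "L_tilde \<alpha> L i = (if \<alpha> = 0 then L i
     else (max (L i powr \<alpha>) (S_alpha \<alpha> L / real CARD('n))) powr (1 / \<alpha>))"

definition S_tilde :: "real \<Rightarrow> ('n::finite \<Rightarrow> real) \<Rightarrow> real" where
  "S_tilde \<alpha> L = (\<Sum>i\<in>UNIV. L_tilde \<alpha> L i powr \<alpha>)"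

definition wnorm :: "real \<Rightarrow> ('n::finite \<Rightarrow> real) \<Rightarrow> real^'n \<Rightarrow> real" where
  "wnorm \<alpha> L x = sqrt (\<Sum>i\<in>UNIV. L_tilde \<alpha> L i powr (1 - \<alpha>) * (x $ i)\<^sup>2)"

definition theta_acd :: "real \<Rightarrow> ('n::finite \<Rightarrow> real) \<Rightarrow> real \<Rightarrow> real" where
  "theta_acd \<alpha> L \<sigma> = sqrt (\<sigma> / (2 * S_tilde \<alpha> L * real CARD('n)))"

fun zeta_acd :: "real \<Rightarrow> ('n::finite \<Rightarrow> real) \<Rightarrow> real \<Rightarrow> nat \<Rightarrow> real" where
  "zeta_acd \<alpha> L \<sigma> 0 = \<sigma>"
| "zeta_acd \<alpha> L \<sigma> (Suc k) =
     (1 - theta_acd \<alpha> L \<sigma>) * zeta_acd \<alpha> L \<sigma> k + theta_acd \<alpha> L \<sigma> * \<sigma>"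

text \<open>State (x_k, y_k, v_k) of the accelerated coordinate descent method, driven by the
  index sequence I (I k = i_k).  y_{k} is the unique solution of
  (theta zeta_k / zeta_{k+1}) (v_k - y) + x_k - y = 0, i.e. y = (c v_k + x_k)/(1+c).\<close>
fun acd :: "real \<Rightarrow> ('n::finite \<Rightarrow> real) \<Rightarrow> real \<Rightarrow> (real^'n \<Rightarrow> real^'n) \<Rightarrow> real^'n
             \<Rightarrow> (nat \<Rightarrow> 'n) \<Rightarrow> nat \<Rightarrow> (real^'n) \<times> (real^'n) \<times> (real^'n)" where
  "acd \<alpha> L \<sigma> g x0 I 0 = (x0, x0, x0)"
| "acd \<alpha> L \<sigma> g x0 I (Suc k) =
     (let (x, y, v) = acd \<alpha> L \<sigma> g x0 I k;
          i = I k;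
          \<theta> = theta_acd \<alpha> L \<sigma>;
          Lt = L_tilde \<alpha> L;
          \<zeta> = zeta_acd \<alpha> L \<sigma>;
          x' = y - ((1 / Lt i) * (g y $ i)) *\<^sub>R axis i 1;
          v' = (1 / \<zeta> (Suc k)) *\<^sub>R
                 (((1 - \<theta>) * \<zeta> k) *\<^sub>R v + (\<theta> * \<sigma>) *\<^sub>R y
                  - (S_tilde \<alpha> L * \<theta> / Lt i * (g y $ i)) *\<^sub>R axis i 1);
          c = \<theta> * \<zeta> (Suc k) / \<zeta> (Suc (Suc k));
          y' = (1 / (1 + c)) *\<^sub>R (c *\<^sub>R v' + x')
      in (x', y', v'))"

definition x_acd where "x_acd \<alpha> L \<sigma> g x0 I k = fst (acd \<alpha> L \<sigma> g x0 I k)"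

text \<open>E[f(x_k)] for i_0,...,i_{k-1} i.i.d. with Pr[i_j = i] = tilde L_i^alpha / tilde S_alpha.\<close>
definition expected_f_acd where
  "expected_f_acd \<alpha> L \<sigma> g x0 f k =
     (\<Sum>I\<in>Pi\<^sub>E {..<k} (\<lambda>_. UNIV).
        (\<Prod>j<k. L_tilde \<alpha> L (I j) powr \<alpha> / S_tilde \<alpha> L) * f (x_acd \<alpha> L \<sigma> g x0 I k))"

end

theory Submission
  imports Defs
begin

lemma descent:
  fixes f :: "real^'n \<Rightarrow> real" and g :: "real^'n \<Rightarrow> real^'n"
  assumes grad: "\<And>x. (f has_derivative (\<lambda>h. g x \<bullet> h)) (at x)"
    and Lip: "\<And>x t. \<bar>g (x + t *\<^sub>R axis i 1) $ i - g x $ i\<bar> \<le> Li * \<bar>t\<bar>"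
  shows "f (x + t *\<^sub>R axis i 1) \<le> f x + t * g x $ i + Li/2 * t^2"
proof -
  define \<psi> where "\<psi> s = f (x + s *\<^sub>R axis i 1) - s * g x $ i - Li/2 * s^2" for s
  have D0: "((\<lambda>s. f (x + s *\<^sub>R axis i 1)) has_real_derivative g (x + s *\<^sub>R axis i 1) $ i) (at s)" for s
  proof -
    have l: "((\<lambda>s. x + s *\<^sub>R axis i (1::real)) has_derivative (\<lambda>h. h *\<^sub>R axis i 1)) (at s)"
      by (auto intro!: derivative_eq_intros)
    have "((\<lambda>s. f (x + s *\<^sub>R axis i 1)) has_derivative (\<lambda>h. g (x + s *\<^sub>R axis i 1) \<bullet> (h *\<^sub>R axis i 1))) (at s)"
      using has_derivative_compose[OF l grad] by (simp add: o_def)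
    moreover have "(\<lambda>h. g (x + s *\<^sub>R axis i 1) \<bullet> (h *\<^sub>R axis i 1)) = (*) (g (x + s *\<^sub>R axis i 1) $ i)"
      by (auto simp: inner_axis mult.commute)
    ultimately show ?thesis by (simp add: has_field_derivative_def)
  qed
  have D: "(\<psi> has_real_derivative (g (x + s *\<^sub>R axis i 1) $ i - g x $ i - Li * s)) (at s)" for s
    unfolding \<psi>_def by (auto intro!: derivative_eq_intros D0)
  have "\<psi> t \<le> \<psi> 0"
  proof (cases "t \<ge> 0")
    case True
    show ?thesis
    proof (rule DERIV_nonpos_imp_nonincreasing[OF True])
      fix s assume "0 \<le> s" "s \<le> t"
      then show "\<exists>y. DERIV \<psi> s :> y \<and> y \<le> 0"
        using D Lip[of x s] by (intro exI[of _ "g (x + s *\<^sub>R axis i 1) $ i - g x $ i - Li * s"]) auto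
    qed
  next
    case False
    have "t \<le> 0" using False by simp
    have "\<exists>y. DERIV \<psi> s :> y \<and> y \<ge> 0" if "t \<le> s" "s \<le> 0" for s
    proof -
      have "g (x + s *\<^sub>R axis i 1) $ i - g x $ i - Li * s \<ge> 0" using Lip[of x s] that by auto
      then show ?thesis using D by blast
    qed
    then show ?thesis using DERIV_nonneg_imp_nondecreasing[of t 0 \<psi>] False by auto
  qed
  then show ?thesis unfolding \<psi>_def by simp
qed

lemma sum_PiE_Suc:
  fixes p :: "'n::finite \<Rightarrow> real"
  shows "(\<Sum>I\<in>Pi\<^sub>E {..<Suc k} (\<lambda>_. UNIV). (\<Prod>j<Suc k. p (I j)) * h I)
       = (\<Sum>J\<in>Pi\<^sub>E {..<k} (\<lambda>_. UNIV). (\<Prod>j<k. p (J j)) * (\<Sum>i\<in>UNIV. p i * h (J(k:=i))))"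
proof -
  have e: "{..<Suc k} = insert k {..<k}" by auto
  have "(\<Sum>I\<in>Pi\<^sub>E {..<Suc k} (\<lambda>_. UNIV). (\<Prod>j<Suc k. p (I j)) * h I)
      = (\<Sum>(i,J)\<in>UNIV \<times> Pi\<^sub>E {..<k} (\<lambda>_. UNIV). (\<Prod>j<Suc k. p ((J(k:=i)) j)) * h (J(k:=i)))"
    unfolding e PiE_insert_eq
    by (subst sum.reindex[OF inj_combinator]) (auto simp: case_prod_beta)
  also have "\<dots> = (\<Sum>(i,J)\<in>UNIV \<times> Pi\<^sub>E {..<k} (\<lambda>_. UNIV). p i * (\<Prod>j<k. p (J j)) * h (J(k:=i)))"
    by (intro sum.cong refl) (auto simp: prod.lessThan_Suc intro!: prod.cong)
  also have "\<dots> = (\<Sum>i\<in>UNIV. \<Sum>J\<in>Pi\<^sub>E {..<k} (\<lambda>_. UNIV). p i * (\<Prod>j<k. p (J j)) * h (J(k:=i)))"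
    by (rule sum.cartesian_product[symmetric])
  also have "\<dots> = (\<Sum>J\<in>Pi\<^sub>E {..<k} (\<lambda>_. UNIV). \<Sum>i\<in>UNIV. p i * (\<Prod>j<k. p (J j)) * h (J(k:=i)))"
    by (rule sum.swap)
  also have "\<dots> = (\<Sum>J\<in>Pi\<^sub>E {..<k} (\<lambda>_. UNIV). (\<Prod>j<k. p (J j)) * (\<Sum>i\<in>UNIV. p i * h (J(k:=i))))"
    by (auto simp: sum_distrib_left intro!: sum.cong)
  finally show ?thesis .
qed

lemma Lt_facts:
  fixes L :: "'n::finite \<Rightarrow> real"
  assumes Lpos: "\<And>i. L i > 0" and alpha: "\<alpha> \<ge> 0"
  shows "L_tilde \<alpha> L i > 0" "L i \<le> L_tilde \<alpha> L i"
    "L_tilde \<alpha> L i powr \<alpha> \<ge> S_tilde \<alpha> L / (2 * real CARD('n))"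
    "S_tilde \<alpha> L \<le> 2 * S_alpha \<alpha> L" "S_alpha \<alpha> L > 0" "S_tilde \<alpha> L > 0"
proof -
  have n: "real CARD('n) > 0" by simp
  have Ln: "L j \<noteq> 0" for j using Lpos[of j] by simp
  have Sp: "S_alpha \<alpha> L > 0" unfolding S_alpha_def
    by (rule sum_pos) (auto simp: Ln)
  show "S_alpha \<alpha> L > 0" by (fact Sp)
  have "L_tilde \<alpha> L i > 0 \<and> L i \<le> L_tilde \<alpha> L i
    \<and> L_tilde \<alpha> L i powr \<alpha> \<ge> S_tilde \<alpha> L / (2 * real CARD('n))
    \<and> S_tilde \<alpha> L \<le> 2 * S_alpha \<alpha> L \<and> S_tilde \<alpha> L > 0"
  proof (cases "\<alpha> = 0")
    case True
    have L0: "L j powr 0 = 1" for j using Lpos[of j] by simp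
    have S: "S_tilde \<alpha> L = real CARD('n)" "S_alpha \<alpha> L = real CARD('n)"
      using True by (simp_all add: S_tilde_def S_alpha_def L_tilde_def L0 Ln)
    show ?thesis using True S Lpos[of i] n by (simp add: L_tilde_def L0)
  next
    case False
    then have ap: "\<alpha> > 0" using alpha by simp
    define M where "M j = max (L j powr \<alpha>) (S_alpha \<alpha> L / real CARD('n))" for j
    have Mp: "M j > 0" for j unfolding M_def using Sp n by (auto simp: max_def)
    have Lt: "L_tilde \<alpha> L j = M j powr (1/\<alpha>)" for j
      using False by (simp add: L_tilde_def M_def)
    have Lta: "L_tilde \<alpha> L j powr \<alpha> = M j" for j
      using Lt Mp[of j] ap by (simp add: powr_powr)
    have St: "S_tilde \<alpha> L = (\<Sum>j\<in>UNIV. M j)" by (simp add: S_tilde_def Lta)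
    have "(\<Sum>j\<in>UNIV. M j) \<le> (\<Sum>j\<in>UNIV. L j powr \<alpha> + S_alpha \<alpha> L / real CARD('n))"
      by (rule sum_mono) (use Sp in \<open>auto simp: M_def\<close>)
    also have "\<dots> = 2 * S_alpha \<alpha> L" using n by (simp add: sum.distrib S_alpha_def)
    finally have St2: "S_tilde \<alpha> L \<le> 2 * S_alpha \<alpha> L" using St by simp
    have "L i = (L i powr \<alpha>) powr (1/\<alpha>)" using ap Lpos[of i] by (simp add: powr_powr)
    also have "\<dots> \<le> M i powr (1/\<alpha>)" using ap Lpos[of i]
      by (intro powr_mono2) (auto simp: M_def)
    finally have "L i \<le> L_tilde \<alpha> L i" using Lt by simp
    moreover have "L_tilde \<alpha> L i > 0" using Lt Mp[of i] by simp
    moreover have "L_tilde \<alpha> L i powr \<alpha> \<ge> S_tilde \<alpha> L / (2 * real CARD('n))"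
    proof -
      have "S_tilde \<alpha> L / (2 * real CARD('n)) \<le> S_alpha \<alpha> L / real CARD('n)"
        using St2 n by (simp add: field_simps)
      also have "\<dots> \<le> M i" by (simp add: M_def)
      finally show ?thesis using Lta by simp
    qed
    moreover have "S_tilde \<alpha> L > 0" unfolding St by (rule sum_pos) (auto simp: Mp)
    ultimately show ?thesis using St2 by simp
  qed
  then show "L_tilde \<alpha> L i > 0" "L i \<le> L_tilde \<alpha> L i"
    "L_tilde \<alpha> L i powr \<alpha> \<ge> S_tilde \<alpha> L / (2 * real CARD('n))"
    "S_tilde \<alpha> L \<le> 2 * S_alpha \<alpha> L" "S_tilde \<alpha> L > 0" by auto
qed

lemma zeta_const: "zeta_acd \<alpha> L \<sigma> k = \<sigma>"
  by (induction k) (auto simp: algebra_simps)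

lemma acd_dep: "(\<And>j. j < k \<Longrightarrow> I j = J j) \<Longrightarrow> acd \<alpha> L \<sigma> g x0 I k = acd \<alpha> L \<sigma> g x0 J k"
  by (induction k) (auto simp: Let_def)

lemma acd_Suc:
  assumes "acd \<alpha> L \<sigma> g x0 I k = (x, y, v)" "\<sigma> \<noteq> 0"
  shows "acd \<alpha> L \<sigma> g x0 I (Suc k) =
    (let i = I k; \<theta> = theta_acd \<alpha> L \<sigma>; Lt = L_tilde \<alpha> L;
         x' = y - ((1 / Lt i) * (g y $ i)) *\<^sub>R axis i 1;
         v' = (1 / \<sigma>) *\<^sub>R
                 (((1 - \<theta>) * \<sigma>) *\<^sub>R v + (\<theta> * \<sigma>) *\<^sub>R y
                  - (S_tilde \<alpha> L * \<theta> / Lt i * (g y $ i)) *\<^sub>R axis i 1)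
     in (x', (1 / (1 + \<theta>)) *\<^sub>R (\<theta> *\<^sub>R v' + x'), v'))"
  using assms by (simp add: Let_def zeta_const)

lemma wnorm_sq: "(wnorm \<alpha> L z)^2 = (\<Sum>j\<in>UNIV. L_tilde \<alpha> L j powr (1 - \<alpha>) * (z $ j)^2)"
  unfolding wnorm_def by (rule real_sqrt_pow2) (auto intro!: sum_nonneg)

lemma Qexp:
  fixes a :: "real^'n" and w :: "'n \<Rightarrow> real"
  shows "(\<Sum>j\<in>UNIV. w j * ((a - c *\<^sub>R axis i 1) $ j)^2)
     = (\<Sum>j\<in>UNIV. w j * (a $ j)^2) - 2 * c * w i * a $ i + c^2 * w i"
proof -
  have "w j * ((a - c *\<^sub>R axis i 1) $ j)^2
      = w j * (a $ j)^2 + (if j = i then c^2 * w i - 2 * c * w i * a $ i else 0)" for j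
    by (auto simp: axis_def power2_eq_square algebra_simps)
  then have "(\<Sum>j\<in>UNIV. w j * ((a - c *\<^sub>R axis i 1) $ j)^2)
     = (\<Sum>j\<in>UNIV. w j * (a $ j)^2) + (\<Sum>j\<in>UNIV. (if j = i then c^2 * w i - 2 * c * w i * a $ i else 0))"
    by (simp add: sum.distrib)
  also have "\<dots> = (\<Sum>j\<in>UNIV. w j * (a $ j)^2) - 2 * c * w i * a $ i + c^2 * w i"
    by simp
  finally show ?thesis .
qed

lemma fin_alg: fixes th fx fy fs s Qa Qv Qy A B ga :: real
 assumes "th*fs \<ge> th*(fy + (-A) + s/2*Qy)" "(1-th)*fx \<ge> (1-th)*(fy + (-B))"
   "s/2*Qa \<le> s/2*((1-th)*Qv + th*Qy)" "th*ga = th*A + (1-th)*B"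
 shows "(fy + s/2*Qa) - th*ga \<le> (1-th)*(fx + s/2*Qv) + th*fs"
proof -
  have e1: "th*(fy + (-A) + s/2*Qy) = th*fy - th*A + th*(s/2*Qy)" by (simp add: algebra_simps)
  have e2: "(1-th)*(fy + (-B)) = (1-th)*fy - (1-th)*B" by (simp add: algebra_simps)
  have e3: "s/2*((1-th)*Qv + th*Qy) = (1-th)*(s/2*Qv) + th*(s/2*Qy)" by (simp add: field_simps)
  have e4: "(1-th)*(fx + s/2*Qv) = (1-th)*fx + (1-th)*(s/2*Qv)" by (simp add: algebra_simps)
  have e5: "(1-th)*fy = fy - th*fy" by (simp add: algebra_simps)
  show ?thesis using assms e1 e2 e3 e4 e5 by linarith
qed

lemma theta_bounds:
  fixes f :: "real^'n \<Rightarrow> real" and g :: "real^'n \<Rightarrow> real^'n"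
    and L :: "'n \<Rightarrow> real" and \<alpha> \<sigma> :: real
  assumes grad: "\<And>x. (f has_derivative (\<lambda>h. g x \<bullet> h)) (at x)"
    and Lpos: "\<And>i. L i > 0"
    and Lip: "\<And>x i t. \<bar>g (x + t *\<^sub>R axis i 1) $ i - g x $ i\<bar> \<le> L i * \<bar>t\<bar>"
    and alpha: "\<alpha> \<ge> 0"
    and sigma_pos: "\<sigma> > 0"
    and strong: "\<And>x y. f y \<ge> f x + g x \<bullet> (y - x) + \<sigma> / 2 * (wnorm \<alpha> L (y - x))\<^sup>2"
  shows "0 \<le> theta_acd \<alpha> L \<sigma> \<and> theta_acd \<alpha> L \<sigma> \<le> 1"
proof -
  define \<theta> where "\<theta> = theta_acd \<alpha> L \<sigma>"
  define Lt where "Lt = L_tilde \<alpha> L"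
  define Sa where "Sa = S_tilde \<alpha> L"
  define n where "n = real CARD('n)"
  define w where "w j = Lt j powr (1 - \<alpha>)" for j
  define p where "p j = Lt j powr \<alpha> / Sa" for j
  define Q where "Q z = (\<Sum>j\<in>UNIV. w j * (z $ j)^2)" for z :: "real^'n"
  have wn: "(wnorm \<alpha> L z)^2 = Q z" for z unfolding Q_def w_def Lt_def by (rule wnorm_sq)
  have Ltp: "Lt i > 0" for i unfolding Lt_def using Lt_facts(1)[OF Lpos alpha] .
  have LLt: "L i \<le> Lt i" for i unfolding Lt_def using Lt_facts(2)[OF Lpos alpha] .
  have Lta: "Lt i powr \<alpha> \<ge> Sa / (2 * n)" for i
    unfolding Lt_def Sa_def n_def using Lt_facts(3)[OF Lpos alpha] .
  have Sap: "Sa > 0" unfolding Sa_def using Lt_facts(6)[OF Lpos alpha] .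
  have np: "n > 0" unfolding n_def by simp
  have wLt: "Lt i powr \<alpha> * w i = Lt i" for i
    using Ltp[of i] by (simp add: w_def powr_add[symmetric])
  have wpos: "w i \<ge> 0" for i by (simp add: w_def)
  have Qnn: "Q z \<ge> 0" for z unfolding Q_def by (auto intro!: sum_nonneg simp: wpos)
  have psum: "(\<Sum>i\<in>UNIV. p i) = 1"
    using Sap by (simp add: p_def sum_divide_distrib[symmetric] Sa_def S_tilde_def Lt_def)
  have pnn: "p i \<ge> 0" for i using Sap by (simp add: p_def)
  have nn: "0 \<le> \<sigma> / (2 * S_tilde \<alpha> L * real CARD('n))"
    using sigma_pos Sap unfolding Sa_def by (intro divide_nonneg_nonneg) auto
  have th2: "\<theta>^2 = \<sigma> / (2 * Sa * n)"
    using nn unfolding \<theta>_def theta_acd_def Sa_def n_def by (rule real_sqrt_pow2)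
  have th0: "\<theta> \<ge> 0" unfolding \<theta>_def theta_acd_def using nn by simp
  have sigLt: "\<sigma> \<le> Lt i powr \<alpha>" for i
  proof -
    have d: "f (0 + 1 *\<^sub>R axis i 1) \<le> f 0 + 1 * g 0 $ i + L i/2 * 1^2"
      by (rule descent[OF grad Lip])
    have s: "f (0 + 1 *\<^sub>R axis i 1) \<ge> f 0 + g 0 \<bullet> (0 + 1 *\<^sub>R axis i 1 - 0) + \<sigma>/2 * Q (0 + 1 *\<^sub>R axis i 1 - 0)"
      using strong[of 0 "0 + 1 *\<^sub>R axis i 1"] wn by simp
    have "Q (0 + 1 *\<^sub>R axis i 1 - 0) = w i"
      using Qexp[of w 0 "-1" i] by (simp add: Q_def)
    moreover have "g 0 \<bullet> (0 + 1 *\<^sub>R axis i 1 - 0) = g 0 $ i" by (simp add: inner_axis)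
    ultimately have "\<sigma> * w i \<le> L i" using d s by simp
    then have "\<sigma> * w i \<le> Lt i" using LLt[of i] by simp
    then have "Lt i powr \<alpha> * (\<sigma> * w i) \<le> Lt i powr \<alpha> * Lt i"
      by (intro mult_left_mono) auto
    then have "\<sigma> * Lt i \<le> Lt i powr \<alpha> * Lt i" using wLt[of i] by (simp add: algebra_simps)
    then show ?thesis using Ltp[of i] by simp
  qed
  have LtS: "Lt i powr \<alpha> \<le> Sa" for i
    unfolding Sa_def S_tilde_def Lt_def by (rule member_le_sum) auto
  have th1: "\<theta> \<le> 1"
  proof -
    have "\<sigma> \<le> Sa" using sigLt[of undefined] LtS[of undefined] by simp
    also have "Sa \<le> 2 * Sa * n"
    proof -
      have "n \<ge> 1" unfolding n_def using zero_less_card_finite[where 'a='n]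
        by (simp del: zero_less_card_finite)
      then have "Sa * 1 \<le> Sa * (2 * n)" using Sap by (intro mult_left_mono) auto
      then show ?thesis by simp
    qed
    finally have "\<theta>^2 \<le> 1" using th2 Sap np by (simp add: divide_le_eq)
    then show ?thesis using th0 by (simp add: power_le_one_iff abs_le_square_iff)
  qed
  show ?thesis using th0 th1 by (simp add: \<theta>_def)
qed

lemma one_step:
  fixes f :: "real^'n \<Rightarrow> real" and g :: "real^'n \<Rightarrow> real^'n"
    and L :: "'n \<Rightarrow> real" and \<alpha> \<sigma> :: real and xstar x y v :: "real^'n"
  assumes grad: "\<And>x. (f has_derivative (\<lambda>h. g x \<bullet> h)) (at x)"
    and Lpos: "\<And>i. L i > 0"
    and Lip: "\<And>x i t. \<bar>g (x + t *\<^sub>R axis i 1) $ i - g x $ i\<bar> \<le> L i * \<bar>t\<bar>"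
    and alpha: "\<alpha> \<ge> 0"
    and sigma_pos: "\<sigma> > 0"
    and strong: "\<And>x y. f y \<ge> f x + g x \<bullet> (y - x) + \<sigma> / 2 * (wnorm \<alpha> L (y - x))\<^sup>2"
    and inv: "y - x = theta_acd \<alpha> L \<sigma> *\<^sub>R (v - y)"
  shows "(\<Sum>i\<in>UNIV. (L_tilde \<alpha> L i powr \<alpha> / S_tilde \<alpha> L) *
      (f (y - ((1 / L_tilde \<alpha> L i) * (g y $ i)) *\<^sub>R axis i 1)
       + \<sigma>/2 * (wnorm \<alpha> L ((1 / \<sigma>) *\<^sub>R
                 (((1 - theta_acd \<alpha> L \<sigma>) * \<sigma>) *\<^sub>R v + (theta_acd \<alpha> L \<sigma> * \<sigma>) *\<^sub>R y
                  - (S_tilde \<alpha> L * theta_acd \<alpha> L \<sigma> / L_tilde \<alpha> L i * (g y $ i)) *\<^sub>R axis i 1) - xstar))^2))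
    \<le> (1 - theta_acd \<alpha> L \<sigma>) * (f x + \<sigma>/2 * (wnorm \<alpha> L (v - xstar))^2) + theta_acd \<alpha> L \<sigma> * f xstar"
proof -
  define \<theta> where "\<theta> = theta_acd \<alpha> L \<sigma>"
  define Lt where "Lt = L_tilde \<alpha> L"
  define Sa where "Sa = S_tilde \<alpha> L"
  define n where "n = real CARD('n)"
  define w where "w j = Lt j powr (1 - \<alpha>)" for j
  define p where "p j = Lt j powr \<alpha> / Sa" for j
  define Q where "Q z = (\<Sum>j\<in>UNIV. w j * (z $ j)^2)" for z :: "real^'n"
  define gy where "gy = g y"
  define a where "a = (1 - \<theta>) *\<^sub>R v + \<theta> *\<^sub>R y - xstar"
  define c where "c i = Sa * \<theta> / Lt i * gy $ i / \<sigma>" for i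
  have wn: "(wnorm \<alpha> L z)^2 = Q z" for z unfolding Q_def w_def Lt_def by (rule wnorm_sq)
  have Ltp: "Lt i > 0" for i unfolding Lt_def using Lt_facts(1)[OF Lpos alpha] .
  have LLt: "L i \<le> Lt i" for i unfolding Lt_def using Lt_facts(2)[OF Lpos alpha] .
  have Lta: "Lt i powr \<alpha> \<ge> Sa / (2 * n)" for i
    unfolding Lt_def Sa_def n_def using Lt_facts(3)[OF Lpos alpha] .
  have Sap: "Sa > 0" unfolding Sa_def using Lt_facts(6)[OF Lpos alpha] .
  have np: "n > 0" unfolding n_def by simp
  have wLt: "Lt i powr \<alpha> * w i = Lt i" for i
    using Ltp[of i] by (simp add: w_def powr_add[symmetric])
  have wpos: "w i \<ge> 0" for i by (simp add: w_def)
  have Qnn: "Q z \<ge> 0" for z unfolding Q_def by (auto intro!: sum_nonneg simp: wpos)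
  have psum: "(\<Sum>i\<in>UNIV. p i) = 1"
    using Sap by (simp add: p_def sum_divide_distrib[symmetric] Sa_def S_tilde_def Lt_def)
  have pnn: "p i \<ge> 0" for i using Sap by (simp add: p_def)
  have nn: "0 \<le> \<sigma> / (2 * S_tilde \<alpha> L * real CARD('n))"
    using sigma_pos Sap unfolding Sa_def by (intro divide_nonneg_nonneg) auto
  have th2: "\<theta>^2 = \<sigma> / (2 * Sa * n)"
    using nn unfolding \<theta>_def theta_acd_def Sa_def n_def by (rule real_sqrt_pow2)
  have th0: "\<theta> \<ge> 0" unfolding \<theta>_def theta_acd_def using nn by simp
  have sigLt: "\<sigma> \<le> Lt i powr \<alpha>" for i
  proof -
    have d: "f (0 + 1 *\<^sub>R axis i 1) \<le> f 0 + 1 * g 0 $ i + L i/2 * 1^2"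
      by (rule descent[OF grad Lip])
    have s: "f (0 + 1 *\<^sub>R axis i 1) \<ge> f 0 + g 0 \<bullet> (0 + 1 *\<^sub>R axis i 1 - 0) + \<sigma>/2 * Q (0 + 1 *\<^sub>R axis i 1 - 0)"
      using strong[of 0 "0 + 1 *\<^sub>R axis i 1"] wn by simp
    have "Q (0 + 1 *\<^sub>R axis i 1 - 0) = w i"
      using Qexp[of w 0 "-1" i] by (simp add: Q_def)
    moreover have "g 0 \<bullet> (0 + 1 *\<^sub>R axis i 1 - 0) = g 0 $ i" by (simp add: inner_axis)
    ultimately have "\<sigma> * w i \<le> L i" using d s by simp
    then have "\<sigma> * w i \<le> Lt i" using LLt[of i] by simp
    then have "Lt i powr \<alpha> * (\<sigma> * w i) \<le> Lt i powr \<alpha> * Lt i"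
      by (intro mult_left_mono) auto
    then have "\<sigma> * Lt i \<le> Lt i powr \<alpha> * Lt i" using wLt[of i] by (simp add: algebra_simps)
    then show ?thesis using Ltp[of i] by simp
  qed
  have LtS: "Lt i powr \<alpha> \<le> Sa" for i
    unfolding Sa_def S_tilde_def Lt_def by (rule member_le_sum) auto
  have th1: "\<theta> \<le> 1"
  proof -
    have "\<sigma> \<le> Sa" using sigLt[of undefined] LtS[of undefined] by simp
    also have "Sa \<le> 2 * Sa * n"
    proof -
      have "n \<ge> 1" unfolding n_def using zero_less_card_finite[where 'a='n]
        by (simp del: zero_less_card_finite)
      then have "Sa * 1 \<le> Sa * (2 * n)" using Sap by (intro mult_left_mono) auto
      then show ?thesis by simp
    qed
    finally have "\<theta>^2 \<le> 1" using th2 Sap np by (simp add: divide_le_eq)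
    then show ?thesis using th0 by (simp add: power_le_one_iff abs_le_square_iff)
  qed
  have step: "p i * (f (y - ((1 / Lt i) * (gy $ i)) *\<^sub>R axis i 1)
       + \<sigma>/2 * Q ((1 / \<sigma>) *\<^sub>R
                 (((1 - \<theta>) * \<sigma>) *\<^sub>R v + (\<theta> * \<sigma>) *\<^sub>R y
                  - (Sa * \<theta> / Lt i * (gy $ i)) *\<^sub>R axis i 1) - xstar))
     \<le> p i * (f y + \<sigma>/2 * Q a) - \<theta> * (gy $ i * a $ i)" for i
  proof -
    let ?g = "gy $ i"
    have "f (y + (- (?g / Lt i)) *\<^sub>R axis i 1) \<le> f y + (- (?g / Lt i)) * gy $ i + L i/2 * (- (?g / Lt i))^2"
      unfolding gy_def by (rule descent[OF grad Lip])
    moreover have "L i/2 * (- (?g / Lt i))^2 \<le> Lt i / 2 * (?g / Lt i)^2"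
      using LLt[of i] by (subst power2_minus) (intro mult_right_mono divide_right_mono, auto)
    moreover have "Lt i / 2 * (?g / Lt i)^2 = ?g^2 / (2 * Lt i)"
      using Ltp[of i] by (simp add: power2_eq_square field_simps)
    moreover have "(- (?g / Lt i)) * gy $ i = - (2 * (?g^2 / (2 * Lt i)))"
      using Ltp[of i] by (simp add: power2_eq_square field_simps)
    ultimately have S1': "f (y + (- (?g / Lt i)) *\<^sub>R axis i 1) \<le> f y - ?g^2 / (2 * Lt i)"
      by linarith
    have xeq: "y - ((1 / Lt i) * ?g) *\<^sub>R axis i 1 = y + (- (?g / Lt i)) *\<^sub>R axis i 1" by simp
    have S1: "f (y - ((1 / Lt i) * ?g) *\<^sub>R axis i 1) \<le> f y - ?g^2 / (2 * Lt i)"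
      unfolding xeq by (rule S1')
    have veq: "(1 / \<sigma>) *\<^sub>R (((1 - \<theta>) * \<sigma>) *\<^sub>R v + (\<theta> * \<sigma>) *\<^sub>R y
                  - (Sa * \<theta> / Lt i * ?g) *\<^sub>R axis i 1) - xstar = a - c i *\<^sub>R axis i 1"
      using sigma_pos by (simp add: a_def c_def vec_eq_iff field_simps)
    have S2: "Q (a - c i *\<^sub>R axis i 1) = Q a - 2 * c i * w i * a $ i + (c i)^2 * w i"
      unfolding Q_def by (rule Qexp)
    have E1: "p i * \<sigma> * c i * w i = \<theta> * ?g"
    proof -
      have "p i * \<sigma> * c i * w i = (Lt i powr \<alpha> * w i) * \<theta> * ?g / Lt i"
        using sigma_pos Sap by (simp add: p_def c_def field_simps)
      then show ?thesis using wLt[of i] Ltp[of i] by simp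
    qed
    have E2: "p i * (\<sigma>/2) * (c i)^2 * w i = ?g^2 / (4 * n * Lt i)"
    proof -
      have "p i * (\<sigma>/2) * (c i)^2 * w i = (p i * \<sigma> * c i * w i) * c i / 2"
        by (simp add: power2_eq_square)
      also have "\<dots> = \<theta> * ?g * (Sa * \<theta> / Lt i * ?g / \<sigma>) / 2" unfolding E1 by (simp add: c_def)
      also have "\<dots> = \<theta>^2 * Sa * ?g^2 / (2 * \<sigma> * Lt i)"
        by (simp add: power2_eq_square algebra_simps)
      also have "\<dots> = ?g^2 / (4 * n * Lt i)"
        using th2 sigma_pos Sap np Ltp[of i] by (simp add: field_simps)
      finally show ?thesis .
    qed
    have E3: "p i * (?g^2 / (2 * Lt i)) \<ge> ?g^2 / (4 * n * Lt i)"
    proof -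
      have "p i * (?g^2 / (2 * Lt i)) = (Lt i powr \<alpha>) * (?g^2 / (2 * Sa * Lt i))"
        using Sap Ltp[of i] by (simp add: p_def field_simps)
      moreover have "(Sa / (2 * n)) * (?g^2 / (2 * Sa * Lt i)) = ?g^2 / (4 * n * Lt i)"
        using Sap Ltp[of i] np by (simp add: field_simps)
      moreover have "(Sa / (2 * n)) * (?g^2 / (2 * Sa * Lt i)) \<le> (Lt i powr \<alpha>) * (?g^2 / (2 * Sa * Lt i))"
        using Lta[of i] Sap Ltp[of i] by (intro mult_right_mono) auto
      ultimately show ?thesis by simp
    qed
    have "p i * (f (y - ((1 / Lt i) * ?g) *\<^sub>R axis i 1) + \<sigma>/2 * Q (a - c i *\<^sub>R axis i 1))
        \<le> p i * (f y - ?g^2 / (2 * Lt i) + \<sigma>/2 * (Q a - 2 * c i * w i * a $ i + (c i)^2 * w i))"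
      using S1 S2 pnn[of i] by (intro mult_left_mono) auto
    also have "\<dots> = p i * (f y + \<sigma>/2 * Q a) - (p i * \<sigma> * c i * w i) * a $ i
        + p i * (\<sigma>/2) * (c i)^2 * w i - p i * (?g^2 / (2 * Lt i))"
      by (simp add: algebra_simps)
    also have "\<dots> \<le> p i * (f y + \<sigma>/2 * Q a) - \<theta> * (?g * a $ i)"
      using E1 E2 E3 by simp
    finally show ?thesis using veq by simp
  qed
  have sum1: "(\<Sum>i\<in>UNIV. p i * (f (y - ((1 / Lt i) * (gy $ i)) *\<^sub>R axis i 1)
       + \<sigma>/2 * Q ((1 / \<sigma>) *\<^sub>R
                 (((1 - \<theta>) * \<sigma>) *\<^sub>R v + (\<theta> * \<sigma>) *\<^sub>R y
                  - (Sa * \<theta> / Lt i * (gy $ i)) *\<^sub>R axis i 1) - xstar)))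
     \<le> (\<Sum>i\<in>UNIV. p i * (f y + \<sigma>/2 * Q a) - \<theta> * (gy $ i * a $ i))"
    by (rule sum_mono) (rule step)
  also have "\<dots> = (f y + \<sigma>/2 * Q a) - \<theta> * (gy \<bullet> a)"
    by (simp add: sum_subtractf sum_distrib_left[symmetric] sum_distrib_right[symmetric] psum inner_vec_def)
  finally have sum2: "(\<Sum>i\<in>UNIV. p i * (f (y - ((1 / Lt i) * (gy $ i)) *\<^sub>R axis i 1)
       + \<sigma>/2 * Q ((1 / \<sigma>) *\<^sub>R
                 (((1 - \<theta>) * \<sigma>) *\<^sub>R v + (\<theta> * \<sigma>) *\<^sub>R y
                  - (Sa * \<theta> / Lt i * (gy $ i)) *\<^sub>R axis i 1) - xstar)))
     \<le> (f y + \<sigma>/2 * Q a) - \<theta> * (gy \<bullet> a)" .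
  have S5: "Q a \<le> (1 - \<theta>) * Q (v - xstar) + \<theta> * Q (y - xstar)"
  proof -
    have "w j * (a $ j)^2 \<le> (1 - \<theta>) * (w j * ((v - xstar) $ j)^2) + \<theta> * (w j * ((y - xstar) $ j)^2)" for j
    proof -
      have aj: "a $ j = (1 - \<theta>) * (v $ j - xstar $ j) + \<theta> * (y $ j - xstar $ j)"
        by (simp add: a_def algebra_simps)
      have "(1 - \<theta>) * (v $ j - xstar $ j)^2 + \<theta> * (y $ j - xstar $ j)^2 - (a $ j)^2
          = \<theta> * (1 - \<theta>) * ((v $ j - xstar $ j) - (y $ j - xstar $ j))^2"
        unfolding aj by (simp add: power2_eq_square algebra_simps)
      also have "\<dots> \<ge> 0" using th0 th1 by simp
      finally have "(a $ j)^2 \<le> (1 - \<theta>) * (v $ j - xstar $ j)^2 + \<theta> * (y $ j - xstar $ j)^2" by simp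
      then have "w j * (a $ j)^2 \<le> w j * ((1 - \<theta>) * (v $ j - xstar $ j)^2 + \<theta> * (y $ j - xstar $ j)^2)"
        using wpos[of j] by (rule mult_left_mono)
      then show ?thesis by (simp add: algebra_simps)
    qed
    then have "Q a \<le> (\<Sum>j\<in>UNIV. (1 - \<theta>) * (w j * ((v - xstar) $ j)^2) + \<theta> * (w j * ((y - xstar) $ j)^2))"
      unfolding Q_def by (rule sum_mono)
    then show ?thesis by (simp add: Q_def sum.distrib sum_distrib_left)
  qed
  have S6: "\<theta> * (gy \<bullet> a) = \<theta> * (gy \<bullet> (y - xstar)) + (1 - \<theta>) * (gy \<bullet> (y - x))"
  proof -
    have aeq: "a = (y - xstar) + (1 - \<theta>) *\<^sub>R (v - y)" by (simp add: a_def algebra_simps)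
    have "gy \<bullet> a = gy \<bullet> (y - xstar) + (1 - \<theta>) * (gy \<bullet> (v - y))"
      by (subst aeq) (simp only: inner_add_right inner_scaleR_right)
    then have "\<theta> * (gy \<bullet> a) = \<theta> * (gy \<bullet> (y - xstar)) + (1 - \<theta>) * (gy \<bullet> (\<theta> *\<^sub>R (v - y)))"
      by (simp only: inner_scaleR_right) (simp add: algebra_simps)
    then show ?thesis using inv by (simp add: \<theta>_def)
  qed
  have S7: "f xstar \<ge> f y + gy \<bullet> (xstar - y) + \<sigma>/2 * Q (y - xstar)"
  proof -
    have "Q (xstar - y) = Q (y - xstar)" unfolding Q_def
      by (intro sum.cong refl) (simp add: power2_commute)
    then show ?thesis using strong[of y xstar] wn by (simp add: gy_def)
  qed
  have S8: "f x \<ge> f y + gy \<bullet> (x - y)"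
  proof -
    have "\<sigma>/2 * (wnorm \<alpha> L (x - y))^2 \<ge> 0" using sigma_pos by simp
    then show ?thesis using strong[of y x] unfolding gy_def by linarith
  qed
  have i1: "gy \<bullet> (xstar - y) = - (gy \<bullet> (y - xstar))" by (simp add: inner_diff_right)
  have i2: "gy \<bullet> (x - y) = - (gy \<bullet> (y - x))" by (simp add: inner_diff_right)
  have S7': "f y + (- (gy \<bullet> (y - xstar))) + \<sigma>/2 * Q (y - xstar) \<le> f xstar" using S7 i1 by linarith
  have m7: "\<theta> * f xstar \<ge> \<theta> * (f y + (- (gy \<bullet> (y - xstar))) + \<sigma>/2 * Q (y - xstar))"
    using S7' th0 by (rule mult_left_mono)
  have S8': "f y + (- (gy \<bullet> (y - x))) \<le> f x" using S8 i2 by linarith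
  have m8: "(1 - \<theta>) * f x \<ge> (1 - \<theta>) * (f y + (- (gy \<bullet> (y - x))))"
    using S8' th1 by (intro mult_left_mono) auto
  have m5: "\<sigma>/2 * Q a \<le> \<sigma>/2 * ((1 - \<theta>) * Q (v - xstar) + \<theta> * Q (y - xstar))"
    using S5 sigma_pos by (intro mult_left_mono) auto
  have fin: "(f y + \<sigma>/2 * Q a) - \<theta> * (gy \<bullet> a) \<le> (1 - \<theta>) * (f x + \<sigma>/2 * Q (v - xstar)) + \<theta> * f xstar"
    by (rule fin_alg[OF m7 m8 m5 S6])
  show ?thesis using sum2 fin
    by (simp add: wn p_def Lt_def Sa_def gy_def \<theta>_def)
qed

definition Ex :: "('n::finite \<Rightarrow> real) \<Rightarrow> nat \<Rightarrow> ((nat \<Rightarrow> 'n) \<Rightarrow> real) \<Rightarrow> real" where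
  "Ex p k h = (\<Sum>I\<in>Pi\<^sub>E {..<k} (\<lambda>_. UNIV). (\<Prod>j<k. p (I j)) * h I)"

lemma Ex_Suc: "Ex p (Suc k) h = Ex p k (\<lambda>J. \<Sum>i\<in>UNIV. p i * h (J(k:=i)))"
  unfolding Ex_def by (rule sum_PiE_Suc)

lemma Ex_0: "Ex p 0 h = h (\<lambda>_. undefined)"
  unfolding Ex_def by simp

lemma Ex_one: assumes "(\<Sum>i\<in>UNIV. p i) = 1" shows "Ex p k (\<lambda>_. 1) = 1"
  by (induction k) (simp_all add: Ex_0 Ex_Suc assms)

lemma Ex_mono: assumes "\<And>i. p i \<ge> 0" "\<And>I. h I \<le> h' I" shows "Ex p k h \<le> Ex p k h'"
  unfolding Ex_def using assms by (intro sum_mono mult_left_mono prod_nonneg) auto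

lemma Ex_lin: "Ex p k (\<lambda>I. c * h I + d) = c * Ex p k h + d * Ex p k (\<lambda>_. 1)"
  unfolding Ex_def by (simp add: algebra_simps sum.distrib sum_distrib_left)

lemma inv_helper:
  fixes Y x v :: "'a::real_vector"
  assumes "(1 + t) *\<^sub>R Y = t *\<^sub>R v + x"
  shows "Y - x = t *\<^sub>R (v - Y)"
proof -
  have "Y - x - t *\<^sub>R (v - Y) = (1 + t) *\<^sub>R Y - (t *\<^sub>R v + x)"
    by (simp add: algebra_simps)
  then show ?thesis using assms by simp
qed

theorem mainTheorem3:
  fixes f :: "real^'n \<Rightarrow> real" and g :: "real^'n \<Rightarrow> real^'n"
    and L :: "'n \<Rightarrow> real" and \<alpha> \<sigma> :: real and xstar x0 :: "real^'n"
  assumes conv: "convex_on UNIV f"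
    and grad: "\<And>x. (f has_derivative (\<lambda>h. g x \<bullet> h)) (at x)"
    and cont: "continuous_on UNIV g"
    and minimizer: "\<And>x. f xstar \<le> f x"
    and Lpos: "\<And>i. L i > 0"
    and Lip: "\<And>x i t. \<bar>g (x + t *\<^sub>R axis i 1) $ i - g x $ i\<bar> \<le> L i * \<bar>t\<bar>"
    and alpha: "\<alpha> \<ge> 0"
    and sigma_pos: "\<sigma> > 0"
    and strong: "\<And>x y. f y \<ge> f x + g x \<bullet> (y - x) + \<sigma> / 2 * (wnorm \<alpha> L (y - x))\<^sup>2"
  shows "\<forall>k. expected_f_acd \<alpha> L \<sigma> g x0 f k - f xstar
           \<le> (1 - 1/2 * sqrt (\<sigma> / (S_alpha \<alpha> L * real CARD('n)))) ^ k
              * (f x0 - f xstar + \<sigma> * (wnorm \<alpha> L (xstar - x0))\<^sup>2)"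
proof
  fix k
  define \<theta> where "\<theta> = theta_acd \<alpha> L \<sigma>"
  define Lt where "Lt = L_tilde \<alpha> L"
  define Sa where "Sa = S_tilde \<alpha> L"
  define p where "p j = Lt j powr \<alpha> / Sa" for j
  define st where "st I k = acd \<alpha> L \<sigma> g x0 I k" for I k
  define \<Psi> where "\<Psi> I k = f (fst (st I k)) + \<sigma>/2 * (wnorm \<alpha> L (snd (snd (st I k)) - xstar))^2 - f xstar" for I k
  have th: "0 \<le> \<theta>" "\<theta> \<le> 1" using theta_bounds[OF grad Lpos Lip alpha sigma_pos strong] by (auto simp: \<theta>_def)
  have Sap: "Sa > 0" unfolding Sa_def using Lt_facts(6)[OF Lpos alpha] .
  have psum: "(\<Sum>i\<in>UNIV. p i) = 1"
    using Sap by (simp add: p_def sum_divide_distrib[symmetric] Sa_def S_tilde_def Lt_def)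
  have pnn: "p i \<ge> 0" for i using Sap by (simp add: p_def)
  have Ex1: "Ex p m (\<lambda>_. 1) = 1" for m by (rule Ex_one[OF psum])
  have inv: "fst (snd (st I m)) - fst (st I m) = \<theta> *\<^sub>R (snd (snd (st I m)) - fst (snd (st I m)))" for I m
  proof (cases m)
    case 0 then show ?thesis by (simp add: st_def)
  next
    case (Suc m')
    obtain x y v where e: "acd \<alpha> L \<sigma> g x0 I m' = (x, y, v)" by (cases "acd \<alpha> L \<sigma> g x0 I m'") auto
    define x' where "x' = y - ((1 / Lt (I m')) * (g y $ I m')) *\<^sub>R axis (I m') 1"
    define v' where "v' = (1 / \<sigma>) *\<^sub>R
                 (((1 - \<theta>) * \<sigma>) *\<^sub>R v + (\<theta> * \<sigma>) *\<^sub>R y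
                  - (Sa * \<theta> / Lt (I m') * (g y $ I m')) *\<^sub>R axis (I m') 1)"
    have sS: "st I m = (x', (1 / (1 + \<theta>)) *\<^sub>R (\<theta> *\<^sub>R v' + x'), v')"
      using acd_Suc[OF e] sigma_pos unfolding st_def Suc
      by (simp add: Let_def x'_def v'_def \<theta>_def Lt_def Sa_def)
    have "(1 + \<theta>) *\<^sub>R ((1 / (1 + \<theta>)) *\<^sub>R (\<theta> *\<^sub>R v' + x')) = \<theta> *\<^sub>R v' + x'"
      using th by simp
    then show ?thesis unfolding sS fst_conv snd_conv by (rule inv_helper)
  qed
  have stepE: "(\<Sum>i\<in>UNIV. p i * \<Psi> (J(m:=i)) (Suc m)) \<le> (1 - \<theta>) * \<Psi> J m" for J m
  proof -
    obtain x y v where e: "acd \<alpha> L \<sigma> g x0 J m = (x, y, v)" by (cases "acd \<alpha> L \<sigma> g x0 J m") auto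
    have e': "acd \<alpha> L \<sigma> g x0 (J(m:=i)) m = (x, y, v)" for i
      using e acd_dep[of m "J(m:=i)" J] by auto
    have invJ: "y - x = theta_acd \<alpha> L \<sigma> *\<^sub>R (v - y)" using inv[of J m] e by (simp add: st_def \<theta>_def)
    define A where "A i = f (y - ((1 / L_tilde \<alpha> L i) * (g y $ i)) *\<^sub>R axis i 1)
       + \<sigma>/2 * (wnorm \<alpha> L ((1 / \<sigma>) *\<^sub>R
                 (((1 - theta_acd \<alpha> L \<sigma>) * \<sigma>) *\<^sub>R v + (theta_acd \<alpha> L \<sigma> * \<sigma>) *\<^sub>R y
                  - (S_tilde \<alpha> L * theta_acd \<alpha> L \<sigma> / L_tilde \<alpha> L i * (g y $ i)) *\<^sub>R axis i 1) - xstar))^2" for i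
    have os: "(\<Sum>i\<in>UNIV. p i * A i) \<le> (1 - \<theta>) * (f x + \<sigma>/2 * (wnorm \<alpha> L (v - xstar))^2) + \<theta> * f xstar"
      using one_step[OF grad Lpos Lip alpha sigma_pos strong invJ, of xstar]
      unfolding A_def p_def Lt_def Sa_def \<theta>_def .
    have eqi: "\<Psi> (J(m:=i)) (Suc m) = A i - f xstar" for i
      using acd_Suc[OF e'[of i]] sigma_pos by (simp add: \<Psi>_def st_def Let_def A_def)
    have "(\<Sum>i\<in>UNIV. p i * \<Psi> (J(m:=i)) (Suc m)) = (\<Sum>i\<in>UNIV. p i * A i) - (\<Sum>i\<in>UNIV. p i) * f xstar"
      by (simp add: eqi right_diff_distrib sum_subtractf sum_distrib_right)
    also have "\<dots> \<le> (1 - \<theta>) * (f x + \<sigma>/2 * (wnorm \<alpha> L (v - xstar))^2) + \<theta> * f xstar - f xstar"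
      using os psum by simp
    also have "\<dots> = (1 - \<theta>) * \<Psi> J m"
      using e by (simp add: \<Psi>_def st_def algebra_simps)
    finally show ?thesis .
  qed
  define n where "n = real CARD('n)"
  define S where "S = S_alpha \<alpha> L"
  define r where "r = 1 - 1/2 * sqrt (\<sigma> / (S * n))"
  define \<Psi>0 where "\<Psi>0 = f x0 + \<sigma>/2 * (wnorm \<alpha> L (x0 - xstar))^2 - f xstar"
  have claim: "Ex p m (\<lambda>I. \<Psi> I m) \<le> (1 - \<theta>)^m * \<Psi>0" for m
  proof (induction m)
    case 0 then show ?case by (simp add: Ex_0 \<Psi>_def \<Psi>0_def st_def)
  next
    case (Suc m)
    have "Ex p (Suc m) (\<lambda>I. \<Psi> I (Suc m)) = Ex p m (\<lambda>J. \<Sum>i\<in>UNIV. p i * \<Psi> (J(m:=i)) (Suc m))"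
      by (rule Ex_Suc)
    also have "\<dots> \<le> Ex p m (\<lambda>J. (1 - \<theta>) * \<Psi> J m + 0)"
      by (rule Ex_mono[OF pnn]) (simp add: stepE)
    also have "\<dots> = (1 - \<theta>) * Ex p m (\<lambda>J. \<Psi> J m)" by (simp only: Ex_lin; simp)
    also have "\<dots> \<le> (1 - \<theta>) * ((1 - \<theta>)^m * \<Psi>0)"
      using Suc th by (intro mult_left_mono) auto
    finally show ?case by simp
  qed
  have expeq: "expected_f_acd \<alpha> L \<sigma> g x0 f k = Ex p k (\<lambda>I. f (fst (st I k)))"
    by (simp add: expected_f_acd_def Ex_def x_acd_def p_def st_def Lt_def Sa_def)
  have "Ex p k (\<lambda>I. f (fst (st I k))) = Ex p k (\<lambda>I. 1 * (f (fst (st I k)) - f xstar) + f xstar)"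
    by simp
  also have "\<dots> = Ex p k (\<lambda>I. f (fst (st I k)) - f xstar) + f xstar"
    by (simp only: Ex_lin Ex1; simp)
  finally have e1: "expected_f_acd \<alpha> L \<sigma> g x0 f k - f xstar = Ex p k (\<lambda>I. f (fst (st I k)) - f xstar)"
    using expeq by simp
  have e2: "Ex p k (\<lambda>I. f (fst (st I k)) - f xstar) \<le> Ex p k (\<lambda>I. \<Psi> I k)"
    by (rule Ex_mono[OF pnn]) (use sigma_pos in \<open>simp add: \<Psi>_def\<close>)
  have Ssym: "(wnorm \<alpha> L (x0 - xstar))^2 = (wnorm \<alpha> L (xstar - x0))^2"
    unfolding wnorm_sq by (intro sum.cong refl) (simp add: power2_commute)
  have P0: "0 \<le> \<Psi>0"
  proof -
    have "0 \<le> \<sigma>/2 * (wnorm \<alpha> L (x0 - xstar))^2" using sigma_pos by simp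
    then show ?thesis using minimizer[of x0] unfolding \<Psi>0_def by linarith
  qed
  have P1: "\<Psi>0 \<le> f x0 - f xstar + \<sigma> * (wnorm \<alpha> L (xstar - x0))^2"
    using sigma_pos Ssym by (simp add: \<Psi>0_def)
  have Sp: "S > 0" unfolding S_def using Lt_facts(5)[OF Lpos alpha] .
  have SaS: "Sa \<le> 2 * S" unfolding S_def Sa_def using Lt_facts(4)[OF Lpos alpha] .
  have np: "n > 0" by (simp add: n_def)
  have "\<sigma> / (4 * S * n) \<le> \<sigma> / (2 * Sa * n)"
    using sigma_pos Sap Sp np SaS by (intro divide_left_mono mult_pos_pos) auto
  then have "sqrt (\<sigma> / (4 * S * n)) \<le> \<theta>"
    unfolding \<theta>_def theta_acd_def Sa_def n_def by (simp add: Sa_def n_def)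
  moreover have "sqrt (\<sigma> / (4 * S * n)) = 1/2 * sqrt (\<sigma> / (S * n))"
  proof -
    have "\<sigma> / (4 * S * n) = (\<sigma> / (S * n)) / 4" by simp
    then have "sqrt (\<sigma> / (4 * S * n)) = sqrt (\<sigma> / (S * n)) / sqrt 4"
      by (simp only: real_sqrt_divide)
    moreover have "sqrt (4::real) = 2" by (simp add: real_sqrt_eq_iff)
    ultimately show ?thesis by simp
  qed
  ultimately have thr: "1 - \<theta> \<le> r" unfolding r_def by simp
  have "(1 - \<theta>)^k \<le> r^k" using th thr by (intro power_mono) auto
  then have "(1 - \<theta>)^k * \<Psi>0 \<le> r^k * (f x0 - f xstar + \<sigma> * (wnorm \<alpha> L (xstar - x0))^2)"
    using P0 P1 th thr by (intro mult_mono) auto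
  then show "expected_f_acd \<alpha> L \<sigma> g x0 f k - f xstar
           \<le> (1 - 1/2 * sqrt (\<sigma> / (S_alpha \<alpha> L * real CARD('n)))) ^ k
              * (f x0 - f xstar + \<sigma> * (wnorm \<alpha> L (xstar - x0))\<^sup>2)"
    using e1 e2 claim[of k] unfolding r_def S_def n_def by linarith
qed

end
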